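(* In the setting of the context, fix a feasible basis and distinct integers $r,s$ with $0\le r,s\le d$. The following are equivalent: (i) in $\Delta$, vertex $r$ is adjacent to vertex $s$ and to no other vertex; (ii) $a^*_r\ne\theta^*_0$ and $$u_i(\theta_s)=u_i(\theta_r)\,\frac{\theta^*_i-a^*_r}{\theta^*_0-a^*_r}\qquad(0\le i\le d).$$
   Context: Let $\mathbb F$ be a field, $d\ge1$, $V$ an $\mathbb F$-vector space of dimension $d+1$, $\mathcal A=\mathrm{End}(V)$ with identity $I$. Let $E^*_0,\dots,E^*_d\in\mathcal A$ satisfy $E^*_iE^*_j=\delta_{i,j}E^*_i$, $\mathrm{rank}(E^*_i)=1$. Let $A\in\mathcal A$ satisfy $E^*_iAE^*_j=0$ if $|i-j|>1$ and $\neq0$ if $|i-j|=1$. Assume $A$ has $d+1$ distinct eigenvalues $\theta_0,\dots,\theta_d\in\mathbb F$ with primitive idempotents $E_i=\prod_{j\ne i}\frac{A-\theta_jI}{\theta_i-\theta_j}$. Let $\theta^*_i\in\mathbb F$, $A^*=\sum_i\theta^*_iE^*_i$, $a^*_i=\mathrm{tr}(E_iA^* )$. Let $\Delta$ be the graph on $\{0,\dots,d\}$ with $i\sim j$ iff $i\ne j$ and $E_iA^*E_j\ne0$. A basis $v_0,\dots,v_d$ of $V$ is feasible if $v_i\in E^*_iV$ for all $i$; then $Av_i=b_{i-1}v_{i-1}+a_iv_i+c_{i+1}v_{i+1}$ ($v_{-1}=v_{d+1}=0$), with $a_i=\mathrm{tr}(E^*_iA)$, nonzero $b_0,\dots,b_{d-1}$,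 $c_1,\dots,c_d$, and $b_d=c_0=0$. Define $u_0,\dots,u_{d+1}\in\mathbb F[\lambda]$ by $u_{-1}=0$, $u_0=1$, $\lambda u_i=c_iu_{i-1}+a_iu_i+b_iu_{i+1}$ $(0\le i\le d-1)$, $\lambda u_d=c_du_{d-1}+a_du_d+u_{d+1}/(b_0\cdots b_{d-1})$. *)

theory Defs
  imports "Jordan_Normal_Form.DL_Rank" "Jordan_Normal_Form.Char_Poly"
begin

definition trace_mat :: "'a::comm_ring_1 mat \<Rightarrow> 'a" where
  "trace_mat M = (\<Sum>i<dim_row M. M $$ (i, i))"

definition prim_idem :: "'a::field mat \<Rightarrow> (nat \<Rightarrow> 'a) \<Rightarrow> nat \<Rightarrow> nat \<Rightarrow> 'a mat" where
  "prim_idem A \<theta> d i =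
     foldr (\<lambda>j M. ((1 / (\<theta> i - \<theta> j)) \<cdot>\<^sub>m (A - \<theta> j \<cdot>\<^sub>m 1\<^sub>m (d+1))) * M)
       (filter (\<lambda>j. j \<noteq> i) [0..<d+1]) (1\<^sub>m (d+1))"

definition dual_mat :: "nat \<Rightarrow> (nat \<Rightarrow> 'a::field) \<Rightarrow> (nat \<Rightarrow> 'a mat) \<Rightarrow> 'a mat" where
  "dual_mat d \<theta>s Es = foldr (\<lambda>i M. \<theta>s i \<cdot>\<^sub>m Es i + M) [0..<d+1] (0\<^sub>m (d+1) (d+1))"

text \<open>The polynomials u_0,...,u_{d+1}: u_{-1}=0, u_0=1,
  lambda u_i = c_i u_{i-1} + a_i u_i + b_i u_{i+1}  (0 <= i <= d-1),
  lambda u_d = c_d u_{d-1} + a_d u_d + u_{d+1}/(b_0 ... b_{d-1}).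
  Here denominator i is the coefficient of u_{i+1}.\<close>
definition u_den :: "nat \<Rightarrow> (nat \<Rightarrow> 'a::field) \<Rightarrow> nat \<Rightarrow> 'a" where
  "u_den d b i = (if i < d then b i else 1 / (\<Prod>k<d. b k))"

fun upoly :: "nat \<Rightarrow> (nat \<Rightarrow> 'a::field) \<Rightarrow> (nat \<Rightarrow> 'a) \<Rightarrow> (nat \<Rightarrow> 'a) \<Rightarrow> nat \<Rightarrow> 'a poly" where
  "upoly d a b c 0 = 1"
| "upoly d a b c (Suc 0) = smult (1 / u_den d b 0) [:- a 0, 1:]"
| "upoly d a b c (Suc (Suc i)) =
     smult (1 / u_den d b (Suc i))
       ([:- a (Suc i), 1:] * upoly d a b c (Suc i) - smult (c (Suc i)) (upoly d a b c i))"

end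

theory Submission
  imports Defs
begin


definition lc :: "nat \<Rightarrow> (nat \<Rightarrow> 'a::field) \<Rightarrow> (nat \<Rightarrow> 'a vec) \<Rightarrow> 'a vec" where
  "lc d \<alpha> w = vec (d+1) (\<lambda>k. \<Sum>i\<le>d. \<alpha> i * w i $ k)"

lemma lc_carrier[simp]: "lc d \<alpha> w \<in> carrier_vec (d+1)"
  by (simp add: lc_def)
lemma lc_dim[simp]: "dim_vec (lc d \<alpha> w) = d+1"
  by (simp add: lc_def)
lemma lc_index[simp]: "k < d+1 \<Longrightarrow> lc d \<alpha> w $ k = (\<Sum>i\<le>d. \<alpha> i * w i $ k)"
  by (simp add: lc_def)

lemma mat_lc:
  assumes M: "M \<in> carrier_mat (d+1) (d+1)" and w: "\<And>i. i \<le> d \<Longrightarrow> w i \<in> carrier_vec (d+1)"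
  shows "M *\<^sub>v lc d \<alpha> w = lc d \<alpha> (\<lambda>i. M *\<^sub>v w i)"
proof (rule eq_vecI)
  show "dim_vec (M *\<^sub>v lc d \<alpha> w) = dim_vec (lc d \<alpha> (\<lambda>i. M *\<^sub>v w i))" using M by simp
  fix k assume "k < dim_vec (lc d \<alpha> (\<lambda>i. M *\<^sub>v w i))"
  hence k: "k < d+1" by simp
  have "(M *\<^sub>v lc d \<alpha> w) $ k = (\<Sum>l<d+1. M $$ (k,l) * (\<Sum>i\<le>d. \<alpha> i * w i $ l))"
    using M k by (simp del: sum.lessThan_Suc add: scalar_prod_def atLeast0LessThan)
  also have "\<dots> = (\<Sum>i\<le>d. \<alpha> i * (\<Sum>l<d+1. M $$ (k,l) * w i $ l))"
    unfolding sum_distrib_left by (subst sum.swap) (simp add: mult_ac)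
  also have "\<dots> = lc d \<alpha> (\<lambda>i. M *\<^sub>v w i) $ k"
  proof -
    have wd: "\<And>i. i \<le> d \<Longrightarrow> dim_vec (w i) = d+1" using w by auto
    have "(\<Sum>i\<le>d. \<alpha> i * (\<Sum>l<d+1. M $$ (k,l) * w i $ l)) = (\<Sum>i\<le>d. \<alpha> i * (M *\<^sub>v w i) $ k)"
      by (intro sum.cong refl) (use M k wd in \<open>simp del: sum.lessThan_Suc add: scalar_prod_def atLeast0LessThan\<close>)
    thus ?thesis using k by simp
  qed
  finally show "(M *\<^sub>v lc d \<alpha> w) $ k = lc d \<alpha> (\<lambda>i. M *\<^sub>v w i) $ k" .
qed

lemma mat_unit_index:
  fixes M :: "'a::field mat"
  assumes M: "M \<in> carrier_mat n n" and "i < n" "l < n"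
  shows "(M *\<^sub>v unit_vec n l) $ i = M $$ (i,l)"
  using assms by simp

lemma mat_zeroI:
  fixes M :: "'a::field mat"
  assumes M: "M \<in> carrier_mat n n" and z: "\<And>w. w \<in> carrier_vec n \<Longrightarrow> M *\<^sub>v w = 0\<^sub>v n"
  shows "M = 0\<^sub>m n n"
proof (rule eq_matI)
  fix i l assume "i < dim_row (0\<^sub>m n n)" "l < dim_col (0\<^sub>m n n)"
  hence il: "i < n" "l < n" by auto
  have "M $$ (i,l) = (M *\<^sub>v unit_vec n l) $ i" using mat_unit_index[OF M il] by simp
  also have "\<dots> = 0" using z[of "unit_vec n l"] il by simp
  finally show "M $$ (i, l) = 0\<^sub>m n n $$ (i, l)" using il by simp
qed (use M in auto)

definition indep :: "nat \<Rightarrow> (nat \<Rightarrow> 'a::field vec) \<Rightarrow> bool" where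
  "indep d w = (\<forall>\<alpha>. lc d \<alpha> w = 0\<^sub>v (d+1) \<longrightarrow> (\<forall>i\<le>d. \<alpha> i = 0))"

definition spans :: "nat \<Rightarrow> (nat \<Rightarrow> 'a::field vec) \<Rightarrow> bool" where
  "spans d w = (\<forall>x \<in> carrier_vec (d+1). \<exists>\<alpha>. x = lc d \<alpha> w)"

lemma lincomb_lc:
  assumes w: "\<And>i. i \<le> d \<Longrightarrow> w i \<in> carrier_vec (d+1)" and inj: "inj_on w {..d}"
  shows "module.lincomb (module_vec TYPE('a::field) (d+1)) a (w ` {..d}) = lc d (a \<circ> w) w"
proof -
  interpret vec_space "TYPE('a)" "d+1" .
  have S: "w ` {..d} \<subseteq> carrier_vec (d+1)" using w by auto
  show ?thesis
  proof (rule eq_vecI)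
    show "dim_vec (lincomb a (w ` {..d})) = dim_vec (lc d (a \<circ> w) w)"
      using lincomb_dim[OF _ S] by simp
    fix k assume "k < dim_vec (lc d (a \<circ> w) w)"
    hence k: "k < d+1" by simp
    show "lincomb a (w ` {..d}) $ k = lc d (a \<circ> w) w $ k"
      unfolding lincomb_index[OF k S] using k by (simp add: sum.reindex[OF inj])
  qed
qed

lemma basis_spans:
  assumes w: "\<And>i. i \<le> d \<Longrightarrow> w i \<in> carrier_vec (d+1)" and inj: "inj_on w {..d}"
    and B: "vectorspace.basis class_ring (module_vec TYPE('a::field) (d+1)) (w ` {..d})"
  shows "spans d w"
  unfolding spans_def
proof
  interpret vec_space "TYPE('a)" "d+1" .
  fix x :: "'a vec" assume x: "x \<in> carrier_vec (d+1)"
  have S: "w ` {..d} \<subseteq> carrier_vec (d+1)" using w by auto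
  from B have "span (w ` {..d}) = carrier_vec (d+1)" unfolding basis_def by auto
  with x have "x \<in> span (w ` {..d})" by simp
  from finite_in_span[OF _ S this] obtain a where "lincomb a (w ` {..d}) = x" by auto
  thus "\<exists>\<alpha>. x = lc d \<alpha> w" using lincomb_lc[OF w inj] by metis
qed

lemma basis_indep:
  assumes w: "\<And>i. i \<le> d \<Longrightarrow> w i \<in> carrier_vec (d+1)" and inj: "inj_on w {..d}"
    and B: "vectorspace.basis class_ring (module_vec TYPE('a::field) (d+1)) (w ` {..d})"
  shows "indep d w"
  unfolding indep_def
proof (rule allI, rule impI)
  interpret vec_space "TYPE('a)" "d+1" .
  fix \<alpha> assume z: "lc d \<alpha> w = 0\<^sub>v (d+1)"
  have S: "w ` {..d} \<subseteq> carrier_vec (d+1)" using w by auto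
  from B have li: "lin_indpt (w ` {..d})" unfolding basis_def by auto
  let ?a = "\<lambda>x. \<alpha> (the_inv_into {..d} w x)"
  have ae: "?a \<circ> w = (\<lambda>i. if i \<le> d then \<alpha> i else ?a (w i))"
    using the_inv_into_f_f[OF inj] by (auto simp: fun_eq_iff)
  have "lc d (?a \<circ> w) w = lc d \<alpha> w"
    unfolding lc_def ae by (intro eq_vecI) auto
  hence lz: "lincomb ?a (w ` {..d}) = 0\<^sub>v (d+1)" using z lincomb_lc[OF w inj] by simp
  show "\<forall>i\<le>d. \<alpha> i = 0"
  proof (rule ccontr)
    assume "\<not> (\<forall>i\<le>d. \<alpha> i = 0)"
    then obtain i where i: "i \<le> d" "\<alpha> i \<noteq> 0" by auto
    have "?a (w i) \<noteq> 0" using i the_inv_into_f_f[OF inj] by auto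
    hence "lin_dep (w ` {..d})" unfolding lin_dep_def
      using i lz by (intro exI[of _ "w ` {..d}"] exI[of _ ?a] exI[of _ "w i"]) auto
    with li show False by simp
  qed
qed

lemma indep_inj:
  assumes I: "indep d w" shows "inj_on w {..d}"
proof (rule inj_onI, rule ccontr)
  fix i j assume i: "i \<in> {..d}" and j: "j \<in> {..d}" and e: "w i = w j" and ne: "i \<noteq> j"
  let ?\<alpha> = "\<lambda>k. if k = i then 1 else if k = j then -1 else (0::'a)"
  have "lc d ?\<alpha> w = 0\<^sub>v (d+1)"
  proof (rule eq_vecI)
    fix k assume "k < dim_vec (0\<^sub>v (d + 1) :: 'a vec)"
    hence k: "k < d+1" by simp
    have "(\<Sum>l\<le>d. ?\<alpha> l * w l $ k) = (\<Sum>l\<in>{i,j}. ?\<alpha> l * w l $ k)"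
      by (rule sum.mono_neutral_right) (use i j in auto)
    also have "\<dots> = 0" using ne e by simp
    finally show "lc d ?\<alpha> w $ k = 0\<^sub>v (d + 1) $ k" using k by simp
  qed simp
  with I i have "?\<alpha> i = 0" unfolding indep_def by blast
  thus False by simp
qed

lemma indep_basis:
  assumes w: "\<And>i. i \<le> d \<Longrightarrow> w i \<in> carrier_vec (d+1)" and I: "indep d w"
  shows "vectorspace.basis class_ring (module_vec TYPE('a::field) (d+1)) (w ` {..d})"
proof -
  interpret vec_space "TYPE('a)" "d+1" .
  have inj: "inj_on w {..d}" by (rule indep_inj[OF I])
  have S: "w ` {..d} \<subseteq> carrier_vec (d+1)" using w by auto
  have li: "lin_indpt (w ` {..d})"
  proof
    assume "lin_dep (w ` {..d})"
    then obtain A' a x where A': "finite A'" "A' \<subseteq> w ` {..d}" and lz: "lincomb a A' = 0\<^sub>v (d+1)"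
      and x: "x \<in> A'" "a x \<noteq> 0"
      unfolding lin_dep_def by auto
    define P where "P = {i\<in>{..d}. w i \<in> A'}"
    have wP: "w ` P = A'" using A' unfolding P_def by auto
    have injP: "inj_on w P" using inj unfolding P_def by (rule inj_on_subset) auto
    define \<alpha> where "\<alpha> i = (if w i \<in> A' then a (w i) else 0)" for i
    have S': "A' \<subseteq> carrier_vec (d+1)" using A' S by auto
    have "lc d \<alpha> w = 0\<^sub>v (d+1)"
    proof (rule eq_vecI)
      fix k assume "k < dim_vec (0\<^sub>v (d + 1) :: 'a vec)"
      hence k: "k < d+1" by simp
      have "(\<Sum>l\<le>d. \<alpha> l * w l $ k) = (\<Sum>l\<in>P. \<alpha> l * w l $ k)"
        by (rule sum.mono_neutral_right) (auto simp: P_def \<alpha>_def)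
      also have "\<dots> = (\<Sum>l\<in>P. a (w l) * w l $ k)"
        by (rule sum.cong) (auto simp: P_def \<alpha>_def)
      also have "\<dots> = (\<Sum>y\<in>A'. a y * y $ k)"
        unfolding wP[symmetric] by (simp add: sum.reindex[OF injP])
      also have "\<dots> = lincomb a A' $ k"
        unfolding lincomb_index[OF k S'] ..
      also have "\<dots> = 0" using lz k by simp
      finally show "lc d \<alpha> w $ k = 0\<^sub>v (d + 1) $ k" using k by simp
    qed simp
    with I have "\<forall>i\<le>d. \<alpha> i = 0" unfolding indep_def by auto
    moreover obtain i where "i \<le> d" "x = w i" using x A' by auto
    ultimately show False using x unfolding \<alpha>_def by auto
  qed
  have card: "card (w ` {..d}) = d+1" using card_image[OF inj] by simp
  show ?thesis
  proof (rule dim_li_is_basis)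
    show "card (w ` {..d}) \<ge> dim" using card dim_is_n by simp
  qed (use S li fin_dim in auto)
qed

lemma indep_spans:
  assumes w: "\<And>i. i \<le> d \<Longrightarrow> w i \<in> carrier_vec (d+1)" and I: "indep d w"
  shows "spans d w"
  by (rule basis_spans[OF w indep_inj[OF I] indep_basis[OF w I]])



lemma lc_lc: "lc d \<alpha> (\<lambda>j. lc d (\<beta> j) w) = lc d (\<lambda>i. \<Sum>j\<le>d. \<alpha> j * \<beta> j i) w"
proof (rule eq_vecI)
  fix k assume "k < dim_vec (lc d (\<lambda>i. \<Sum>j\<le>d. \<alpha> j * \<beta> j i) w)"
  hence k: "k < d+1" by simp
  have "(\<Sum>j\<le>d. \<alpha> j * (\<Sum>i\<le>d. \<beta> j i * w i $ k)) = (\<Sum>i\<le>d. (\<Sum>j\<le>d. \<alpha> j * \<beta> j i) * w i $ k)"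
    unfolding sum_distrib_left sum_distrib_right by (subst sum.swap) (simp add: mult_ac)
  thus "lc d \<alpha> (\<lambda>j. lc d (\<beta> j) w) $ k = lc d (\<lambda>i. \<Sum>j\<le>d. \<alpha> j * \<beta> j i) w $ k"
    using k by simp
qed simp

lemma lc_smult_vec:
  assumes z: "z \<in> carrier_vec (d+1)"
  shows "lc d \<alpha> (\<lambda>k. f k \<cdot>\<^sub>v z) = (\<Sum>k\<le>d. \<alpha> k * f k) \<cdot>\<^sub>v z"
  by (rule eq_vecI) (use z in \<open>auto simp: sum_distrib_left sum_distrib_right mult_ac\<close>)

lemma lc_delta:
  assumes z: "z \<in> carrier_vec (d+1)" and m: "m \<le> d"
  shows "lc d \<alpha> (\<lambda>k. if k = m then z else 0\<^sub>v (d+1)) = \<alpha> m \<cdot>\<^sub>v z"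
proof -
  have "lc d \<alpha> (\<lambda>k. if k = m then z else 0\<^sub>v (d+1)) = lc d \<alpha> (\<lambda>k. (if k = m then 1 else 0) \<cdot>\<^sub>v z)"
    by (rule eq_vecI) (use z in \<open>auto intro!: sum.cong\<close>)
  also have "\<dots> = \<alpha> m \<cdot>\<^sub>v z" unfolding lc_smult_vec[OF z] using m
    by (simp add: if_distrib cong: if_cong)
  finally show ?thesis .
qed

lemma lc_scale: "lc d (\<lambda>i. x * \<alpha> i) w = x \<cdot>\<^sub>v lc d \<alpha> w"
  by (rule eq_vecI) (auto simp: sum_distrib_left mult_ac)

lemma lc_cong: "(\<And>i. i \<le> d \<Longrightarrow> \<alpha> i = \<beta> i) \<Longrightarrow> lc d \<alpha> w = lc d \<beta> w"
  unfolding lc_def by (intro eq_vecI) auto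

lemma lc_zero: "lc d (\<lambda>i. 0) w = 0\<^sub>v (d+1)"
  by (rule eq_vecI) auto

lemma lc_diff: "lc d (\<lambda>i. \<alpha> i - \<beta> i) w = lc d \<alpha> w - lc d \<beta> w"
  by (rule eq_vecI) (auto simp: sum_subtractf algebra_simps)

lemma indep_eq:
  assumes I: "indep d w" and e: "lc d \<alpha> w = lc d \<beta> w" and i: "i \<le> d"
  shows "\<alpha> i = \<beta> i"
proof -
  have "lc d (\<lambda>i. \<alpha> i - \<beta> i) w = 0\<^sub>v (d+1)" unfolding lc_diff e
    by (rule eq_vecI) simp_all
  with I i show ?thesis unfolding indep_def by auto
qed

lemma unit_lc:
  assumes x: "x \<in> carrier_vec (d+1)"
  shows "x = lc d (\<lambda>l. x $ l) (\<lambda>l. unit_vec (d+1) l)"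
proof (rule eq_vecI)
  fix k assume "k < dim_vec (lc d (\<lambda>l. x $ l) (\<lambda>l. unit_vec (d+1) l))"
  hence k: "k < d+1" by simp
  have "(\<Sum>l\<le>d. x $ l * unit_vec (d+1) l $ k) = (\<Sum>l\<le>d. if l = k then x $ k else 0)"
    by (rule sum.cong) (use k in auto)
  also have "\<dots> = x $ k" using k by simp
  finally show "x $ k = lc d (\<lambda>l. x $ l) (\<lambda>l. unit_vec (d+1) l) $ k" using k by simp
qed (use x in simp)



lemma lc_carrier_Suc[simp]: "lc d \<alpha> w \<in> carrier_vec (Suc d)"
  using lc_carrier[of d \<alpha> w] by simp

lemma lc_cong_w: "(\<And>i. i \<le> d \<Longrightarrow> w i = w' i) \<Longrightarrow> lc d \<alpha> w = lc d \<alpha> w'"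
  unfolding lc_def by (intro eq_vecI) auto

locale tri_setting =
  fixes d :: nat
    and Es :: "nat \<Rightarrow> 'a::field mat"
    and A :: "'a mat"
    and \<theta> \<theta>s :: "nat \<Rightarrow> 'a"
    and v :: "nat \<Rightarrow> 'a vec"
    and a b c :: "nat \<Rightarrow> 'a"
  assumes d: "d \<ge> 1"
    and Es_carrier: "\<And>i. i \<le> d \<Longrightarrow> Es i \<in> carrier_mat (d+1) (d+1)"
    and Es_orth: "\<And>i j. i \<le> d \<Longrightarrow> j \<le> d \<Longrightarrow>
                    Es i * Es j = (if i = j then Es i else 0\<^sub>m (d+1) (d+1))"
    and A_carrier: "A \<in> carrier_mat (d+1) (d+1)"
    and A_nonzero: "\<And>i j. i \<le> d \<Longrightarrow> j \<le> d \<Longrightarrow> (i = j + 1 \<or> j = i + 1) \<Longrightarrow>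
                   Es i * A * Es j \<noteq> 0\<^sub>m (d+1) (d+1)"
    and \<theta>_distinct: "inj_on \<theta> {0..d}"
    and \<theta>_eig: "\<And>i. i \<le> d \<Longrightarrow> eigenvalue A (\<theta> i)"
    and v_carrier: "\<And>i. i \<le> d \<Longrightarrow> v i \<in> carrier_vec (d+1)"
    and v_feasible: "\<And>i. i \<le> d \<Longrightarrow> \<exists>w \<in> carrier_vec (d+1). v i = Es i *\<^sub>v w"
    and v_inj: "inj_on v {0..d}"
    and v_basis: "vectorspace.basis class_ring (module_vec TYPE('a) (d+1)) (v ` {0..d})"
    and v_action: "\<And>i. i \<le> d \<Longrightarrow>
          A *\<^sub>v v i = (if i \<ge> 1 then b (i - 1) \<cdot>\<^sub>v v (i - 1) else 0\<^sub>v (d+1))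
                     + a i \<cdot>\<^sub>v v i
                     + (if i < d then c (i + 1) \<cdot>\<^sub>v v (i + 1) else 0\<^sub>v (d+1))"
begin

lemma v_spans: "spans d v"
  using basis_spans[OF v_carrier, of id] v_inj v_basis by (simp add: atLeast0AtMost)

lemma v_indep: "indep d v"
  using basis_indep[OF v_carrier, of id] v_inj v_basis by (simp add: atLeast0AtMost)

lemma Es_v: "i \<le> d \<Longrightarrow> j \<le> d \<Longrightarrow> Es i *\<^sub>v v j = (if i = j then v j else 0\<^sub>v (d+1))"
proof -
  assume i: "i \<le> d" and j: "j \<le> d"
  obtain w where w: "w \<in> carrier_vec (d+1)" "v j = Es j *\<^sub>v w" using v_feasible[OF j] by auto
  have "Es i *\<^sub>v v j = (Es i * Es j) *\<^sub>v w"
    using w Es_carrier[OF i] Es_carrier[OF j] by simp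
  also have "\<dots> = (if i = j then v j else 0\<^sub>v (d+1))"
    using Es_orth[OF i j] w by auto
  finally show ?thesis .
qed

lemma Es_lc: "m \<le> d \<Longrightarrow> Es m *\<^sub>v lc d F v = F m \<cdot>\<^sub>v v m"
proof -
  assume m: "m \<le> d"
  have "Es m *\<^sub>v lc d F v = lc d F (\<lambda>i. Es m *\<^sub>v v i)"
    by (rule mat_lc[OF Es_carrier[OF m] v_carrier])
  also have "\<dots> = lc d F (\<lambda>i. if i = m then v m else 0\<^sub>v (d+1))"
    by (rule lc_cong_w) (use m Es_v in auto)
  also have "\<dots> = F m \<cdot>\<^sub>v v m" by (rule lc_delta[OF v_carrier[OF m] m])
  finally show ?thesis .
qed

definition tri :: "nat \<Rightarrow> nat \<Rightarrow> 'a" where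
  "tri i j = (if j = i + 1 then b i else 0) + (if i = j then a i else 0) + (if i = j + 1 then c i else 0)"

lemma A_v: "j \<le> d \<Longrightarrow> A *\<^sub>v v j = lc d (\<lambda>i. tri i j) v"
proof -
  assume j: "j \<le> d"
  show ?thesis
  proof (rule eq_vecI)
    fix k assume "k < dim_vec (lc d (\<lambda>i. tri i j) v)"
    hence k: "k < d+1" by simp
    have vd: "\<And>i. i \<le> d \<Longrightarrow> dim_vec (v i) = d+1" using v_carrier by auto
    have lhs: "(A *\<^sub>v v j) $ k = (if j \<ge> 1 then b (j-1) * v (j-1) $ k else 0) + a j * v j $ k
       + (if j < d then c (j+1) * v (j+1) $ k else 0)"
      unfolding v_action[OF j] using k j vd by auto
    have s1: "(\<Sum>i\<le>d. (if j = i + 1 then b i else 0) * v i $ k) = (if j \<ge> 1 then b (j-1) * v (j-1) $ k else 0)"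
    proof -
      have "(\<Sum>i\<le>d. (if j = i + 1 then b i else 0) * v i $ k)
          = (\<Sum>i\<le>d. if i = j - 1 then (if j \<ge> 1 then b i * v i $ k else 0) else 0)"
        by (rule sum.cong) auto
      also have "\<dots> = (if j \<ge> 1 then b (j-1) * v (j-1) $ k else 0)" using j by auto
      finally show ?thesis .
    qed
    have s2: "(\<Sum>i\<le>d. (if i = j then a i else 0) * v i $ k) = a j * v j $ k"
    proof -
      have "(\<Sum>i\<le>d. (if i = j then a i else 0) * v i $ k) = (\<Sum>i\<le>d. if i = j then a i * v i $ k else 0)"
        by (rule sum.cong) auto
      thus ?thesis using j by simp
    qed
    have s3: "(\<Sum>i\<le>d. (if i = j + 1 then c i else 0) * v i $ k) = (if j < d then c (j+1) * v (j+1) $ k else 0)"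
    proof -
      have "(\<Sum>i\<le>d. (if i = j + 1 then c i else 0) * v i $ k) = (\<Sum>i\<le>d. if i = j + 1 then c i * v i $ k else 0)"
        by (rule sum.cong) auto
      thus ?thesis by simp
    qed
    have "lc d (\<lambda>i. tri i j) v $ k = (\<Sum>i\<le>d. (if j = i + 1 then b i else 0) * v i $ k)
       + (\<Sum>i\<le>d. (if i = j then a i else 0) * v i $ k) + (\<Sum>i\<le>d. (if i = j + 1 then c i else 0) * v i $ k)"
      using k unfolding tri_def by (simp add: distrib_right sum.distrib)
    thus "(A *\<^sub>v v j) $ k = lc d (\<lambda>i. tri i j) v $ k" using lhs s1 s2 s3 by simp
  qed (use A_carrier in simp)
qed

definition Tf :: "(nat \<Rightarrow> 'a) \<Rightarrow> nat \<Rightarrow> 'a" where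
  "Tf F i = (\<Sum>j\<le>d. tri i j * F j)"

lemma A_lc: "A *\<^sub>v lc d F v = lc d (Tf F) v"
proof -
  have "A *\<^sub>v lc d F v = lc d F (\<lambda>j. A *\<^sub>v v j)" by (rule mat_lc[OF A_carrier v_carrier])
  also have "\<dots> = lc d F (\<lambda>j. lc d (\<lambda>i. tri i j) v)" by (rule lc_cong_w) (simp add: A_v)
  also have "\<dots> = lc d (Tf F) v" unfolding lc_lc Tf_def by (simp add: mult_ac)
  finally show ?thesis .
qed

lemma Tf_simp: "i \<le> d \<Longrightarrow> Tf F i = (if i < d then b i * F (i+1) else 0) + a i * F i + (if i \<ge> 1 then c i * F (i-1) else 0)"
proof -
  assume i: "i \<le> d"
  have "Tf F i = (\<Sum>j\<le>d. (if j = i + 1 then b i * F j else 0)) + (\<Sum>j\<le>d. (if j = i then a i * F j else 0))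
     + (\<Sum>j\<le>d. (if j = i - 1 then (if i \<ge> 1 then c i * F j else 0) else 0))"
    unfolding Tf_def sum.distrib[symmetric] by (rule sum.cong) (auto simp: tri_def)
  also have "\<dots> = (if i < d then b i * F (i+1) else 0) + a i * F i + (if i \<ge> 1 then c i * F (i-1) else 0)"
    using i by auto
  finally show ?thesis .
qed

lemma smult_v: "m \<le> d \<Longrightarrow> x \<cdot>\<^sub>v v m = lc d (\<lambda>k. if k = m then x else 0) v"
proof -
  assume m: "m \<le> d"
  have "lc d (\<lambda>k. if k = m then x else 0) v = lc d (\<lambda>k. x) (\<lambda>k. if k = m then v m else 0\<^sub>v (d+1))"
    by (rule eq_vecI) (auto intro!: sum.cong)
  also have "\<dots> = x \<cdot>\<^sub>v v m" by (rule lc_delta[OF v_carrier[OF m] m])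
  finally show ?thesis by simp
qed

lemma Tf_delta: "i \<le> d \<Longrightarrow> m \<le> d \<Longrightarrow> Tf (\<lambda>k. if k = m then x else 0) i = tri i m * x"
  unfolding Tf_def by (simp add: if_distrib cong: if_cong)

lemma EAE_lc:
  assumes p: "p \<le> d" and q: "q \<le> d"
  shows "(Es p * A * Es q) *\<^sub>v lc d F v = (tri p q * F q) \<cdot>\<^sub>v v p"
proof -
  have "(Es p * A * Es q) *\<^sub>v lc d F v = (Es p * A) *\<^sub>v (Es q *\<^sub>v lc d F v)"
    by (rule assoc_mult_mat_vec) (use Es_carrier[OF p] Es_carrier[OF q] A_carrier in auto)
  also have "\<dots> = Es p *\<^sub>v (A *\<^sub>v (Es q *\<^sub>v lc d F v))"
    by (rule assoc_mult_mat_vec) (use Es_carrier[OF p] Es_carrier[OF q] A_carrier in auto)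
  also have "Es q *\<^sub>v lc d F v = lc d (\<lambda>k. if k = q then F q else 0) v"
    using Es_lc[OF q] smult_v[OF q] by simp
  also have "A *\<^sub>v \<dots> = lc d (Tf (\<lambda>k. if k = q then F q else 0)) v" by (rule A_lc)
  also have "Es p *\<^sub>v \<dots> = (tri p q * F q) \<cdot>\<^sub>v v p"
    using Es_lc[OF p] Tf_delta[OF p q] by simp
  finally show ?thesis .
qed

lemma tri_nz: assumes p: "p \<le> d" and q: "q \<le> d" and pq: "p = q + 1 \<or> q = p + 1"
  shows "tri p q \<noteq> 0"
proof
  assume z: "tri p q = 0"
  have "Es p * A * Es q = 0\<^sub>m (d+1) (d+1)"
  proof (rule mat_zeroI)
    show "Es p * A * Es q \<in> carrier_mat (d+1) (d+1)"
      using Es_carrier[OF p] Es_carrier[OF q] A_carrier by simp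
    fix w :: "'a vec" assume "w \<in> carrier_vec (d+1)"
    then obtain F where "w = lc d F v" using v_spans unfolding spans_def by auto
    thus "(Es p * A * Es q) *\<^sub>v w = 0\<^sub>v (d+1)"
      using EAE_lc[OF p q] z v_carrier[OF p] by (intro eq_vecI) auto
  qed
  with A_nonzero[OF p q pq] show False by simp
qed

lemma b_nz: "i < d \<Longrightarrow> b i \<noteq> 0"
  using tri_nz[of i "i+1"] by (simp add: tri_def)

lemma c_nz: "1 \<le> i \<Longrightarrow> i \<le> d \<Longrightarrow> c i \<noteq> 0"
  using tri_nz[of i "i-1"] by (cases i) (auto simp: tri_def)

end


context tri_setting begin

definition U :: "nat \<Rightarrow> nat \<Rightarrow> 'a" where
  "U j i = poly (upoly d a b c i) (\<theta> j)"

definition y :: "nat \<Rightarrow> 'a vec" where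
  "y j = lc d (U j) v"

lemma u_rec: "i < d \<Longrightarrow> poly (upoly d a b c (i+1)) x * b i
   = (x - a i) * poly (upoly d a b c i) x - (if i \<ge> 1 then c i * poly (upoly d a b c (i-1)) x else 0)"
proof -
  assume i: "i < d"
  have bi: "b i \<noteq> 0" by (rule b_nz[OF i])
  show ?thesis
  proof (cases i)
    case 0
    thus ?thesis using i bi by (simp add: u_den_def field_simps)
  next
    case (Suc i')
    thus ?thesis using i bi by (simp add: u_den_def algebra_simps)
  qed
qed

lemma coord_rec:
  assumes E: "\<And>i. i \<le> d \<Longrightarrow> Tf F i = t * F i"
  shows "i \<le> d \<Longrightarrow> F i = F 0 * poly (upoly d a b c i) t"
proof -
  let ?u = "\<lambda>i. poly (upoly d a b c i) t"
  have step: "F (i+1) = F 0 * ?u (i+1)"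
    if i: "i < d" and h1: "F i = F 0 * ?u i" and h2: "i \<ge> 1 \<Longrightarrow> F (i-1) = F 0 * ?u (i-1)" for i
  proof -
    have e: "b i * F (i+1) + a i * F i + (if i \<ge> 1 then c i * F (i-1) else 0) = t * F i"
      using E[of i] Tf_simp[of i F] i by simp
    have "F (i+1) * b i = (t - a i) * F i - (if i \<ge> 1 then c i * F (i-1) else 0)"
      using e by (simp add: algebra_simps)
    also have "\<dots> = F 0 * (?u (i+1) * b i)"
      unfolding u_rec[OF i] using h1 h2 by (auto simp: algebra_simps)
    finally have "F (i+1) * b i = (F 0 * ?u (i+1)) * b i" by simp
    thus ?thesis using b_nz[OF i] by simp
  qed
  have "\<forall>i. i \<le> d \<longrightarrow> F i = F 0 * ?u i \<and> (i + 1 \<le> d \<longrightarrow> F (i+1) = F 0 * ?u (i+1))"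
  proof (intro allI)
    fix i show "i \<le> d \<longrightarrow> F i = F 0 * ?u i \<and> (i + 1 \<le> d \<longrightarrow> F (i+1) = F 0 * ?u (i+1))"
    proof (induction i)
      case 0
      show ?case using step[of 0] by simp
    next
      case (Suc i)
      show ?case
      proof (intro impI conjI)
        assume "Suc i \<le> d"
        thus "F (Suc i) = F 0 * ?u (Suc i)" using Suc by simp
        assume "Suc i + 1 \<le> d"
        thus "F (Suc i + 1) = F 0 * ?u (Suc i + 1)"
          using Suc step[of "Suc i"] by simp
      qed
    qed
  qed
  thus "i \<le> d \<Longrightarrow> F i = F 0 * ?u i" by blast
qed

lemma eig_coord: "j \<le> d \<Longrightarrow> i \<le> d \<Longrightarrow> Tf (U j) i = \<theta> j * U j i"
proof -
  assume j: "j \<le> d" and i: "i \<le> d"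
  obtain z where z: "eigenvector A z (\<theta> j)" using \<theta>_eig[OF j] unfolding eigenvalue_def by auto
  hence zc: "z \<in> carrier_vec (d+1)" and zn: "z \<noteq> 0\<^sub>v (d+1)" and Az: "A *\<^sub>v z = \<theta> j \<cdot>\<^sub>v z"
    using A_carrier unfolding eigenvector_def by auto
  obtain F where F: "z = lc d F v" using v_spans zc unfolding spans_def by auto
  have "lc d (Tf F) v = lc d (\<lambda>i. \<theta> j * F i) v"
    using Az unfolding F A_lc lc_scale by simp
  hence E: "\<And>i. i \<le> d \<Longrightarrow> Tf F i = \<theta> j * F i" using indep_eq[OF v_indep] by blast
  have FU: "\<And>i. i \<le> d \<Longrightarrow> F i = F 0 * U j i" using coord_rec[OF E] unfolding U_def by blast
  have F0: "F 0 \<noteq> 0"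
  proof
    assume "F 0 = 0"
    hence "lc d F v = lc d (\<lambda>i. 0) v" by (intro lc_cong) (subst FU, simp_all)
    with zn F lc_zero[of d v] show False by metis
  qed
  have "Tf F i = F 0 * Tf (U j) i" unfolding Tf_def sum_distrib_left
  proof (rule sum.cong)
    fix k assume "k \<in> {..d}"
    hence "F k = F 0 * U j k" by (intro FU) simp
    thus "tri i k * F k = F 0 * (tri i k * U j k)" by (simp add: mult_ac)
  qed simp
  with E[OF i] FU[OF i] F0 show ?thesis by (metis mult.left_commute mult_left_cancel)
qed

lemma U0[simp]: "U j 0 = 1" by (simp add: U_def)

lemma y_carrier[simp]: "y j \<in> carrier_vec (d+1)" by (simp add: y_def)

lemma A_y: "j \<le> d \<Longrightarrow> A *\<^sub>v y j = \<theta> j \<cdot>\<^sub>v y j"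
proof -
  assume j: "j \<le> d"
  have "A *\<^sub>v y j = lc d (Tf (U j)) v" unfolding y_def A_lc ..
  also have "\<dots> = lc d (\<lambda>i. \<theta> j * U j i) v" by (rule lc_cong) (simp add: eig_coord j)
  also have "\<dots> = \<theta> j \<cdot>\<^sub>v y j" unfolding lc_scale y_def ..
  finally show ?thesis .
qed

lemma y_nz: "y j \<noteq> 0\<^sub>v (d+1)"
proof
  assume "y j = 0\<^sub>v (d+1)"
  hence "lc d (U j) v = lc d (\<lambda>i. 0) v" unfolding y_def lc_zero .
  from indep_eq[OF v_indep this, of 0] show False by simp
qed

end


lemma smult_mat_vec: "X \<in> carrier_mat n m \<Longrightarrow> w \<in> carrier_vec m \<Longrightarrow> (c \<cdot>\<^sub>m X) *\<^sub>v w = c \<cdot>\<^sub>v (X *\<^sub>v w)"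
  by (intro eq_vecI) (auto simp: scalar_prod_def sum_distrib_left mult_ac)

lemma smult_vec_zero_iff:
  fixes x :: "'a::field vec"
  assumes x: "x \<in> carrier_vec n" and nz: "x \<noteq> 0\<^sub>v n" and z: "t \<cdot>\<^sub>v x = 0\<^sub>v n"
  shows "t = 0"
proof (rule ccontr)
  assume t: "t \<noteq> 0"
  have "x = 0\<^sub>v n"
  proof (rule eq_vecI)
    fix i assume "i < dim_vec (0\<^sub>v n :: 'a vec)"
    hence i: "i < n" by simp
    have "t * x $ i = 0" using arg_cong[OF z, of "\<lambda>u. u $ i"] i x by simp
    thus "x $ i = 0\<^sub>v n $ i" using t i by simp
  qed (use x in simp)
  with nz show False by simp
qed

lemma lc_add: "lc d \<alpha> w + lc d \<beta> w = lc d (\<lambda>i. \<alpha> i + \<beta> i) w"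
  by (rule eq_vecI) (auto simp: sum.distrib algebra_simps)

lemma prod_list_one: "(\<And>x. x \<in> set xs \<Longrightarrow> f x = 1) \<Longrightarrow> prod_list (map f xs) = (1::'a::monoid_mult)"
  by (induction xs) auto

context tri_setting begin

abbreviation E :: "nat \<Rightarrow> 'a mat" where "E m \<equiv> prim_idem A \<theta> d m"

abbreviation D :: "'a mat" where "D \<equiv> dual_mat d \<theta>s Es"

lemma y_carrier_Suc[simp]: "y j \<in> carrier_vec (Suc d)" using y_carrier[of j] by simp
lemma y_dim[simp]: "dim_vec (y j) = Suc d" using y_carrier[of j] by simp

lemma factor_y:
  assumes k: "k \<le> d"
  shows "((1 / (\<theta> m - \<theta> j)) \<cdot>\<^sub>m (A - \<theta> j \<cdot>\<^sub>m 1\<^sub>m (d+1))) *\<^sub>v y k = ((\<theta> k - \<theta> j) / (\<theta> m - \<theta> j)) \<cdot>\<^sub>v y k"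
proof -
  have "((1 / (\<theta> m - \<theta> j)) \<cdot>\<^sub>m (A - \<theta> j \<cdot>\<^sub>m 1\<^sub>m (d+1))) *\<^sub>v y k
      = (1 / (\<theta> m - \<theta> j)) \<cdot>\<^sub>v ((A - \<theta> j \<cdot>\<^sub>m 1\<^sub>m (d+1)) *\<^sub>v y k)"
    by (rule smult_mat_vec) (use A_carrier in auto)
  also have "(A - \<theta> j \<cdot>\<^sub>m 1\<^sub>m (d+1)) *\<^sub>v y k = A *\<^sub>v y k - (\<theta> j \<cdot>\<^sub>m 1\<^sub>m (d+1)) *\<^sub>v y k"
    by (rule minus_mult_distrib_mat_vec) (use A_carrier in auto)
  also have "(\<theta> j \<cdot>\<^sub>m 1\<^sub>m (d+1)) *\<^sub>v y k = \<theta> j \<cdot>\<^sub>v y k"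
    by (subst smult_mat_vec[of _ "d+1" "d+1"]) auto
  also have "A *\<^sub>v y k = \<theta> k \<cdot>\<^sub>v y k" by (rule A_y[OF k])
  finally show ?thesis
    by (intro eq_vecI) (auto simp: divide_inverse algebra_simps)
qed

lemma foldr_y:
  assumes k: "k \<le> d"
  shows "foldr (\<lambda>j M. ((1 / (\<theta> m - \<theta> j)) \<cdot>\<^sub>m (A - \<theta> j \<cdot>\<^sub>m 1\<^sub>m (d+1))) * M) L (1\<^sub>m (d+1)) \<in> carrier_mat (d+1) (d+1)
   \<and> foldr (\<lambda>j M. ((1 / (\<theta> m - \<theta> j)) \<cdot>\<^sub>m (A - \<theta> j \<cdot>\<^sub>m 1\<^sub>m (d+1))) * M) L (1\<^sub>m (d+1)) *\<^sub>v y k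
     = prod_list (map (\<lambda>j. (\<theta> k - \<theta> j) / (\<theta> m - \<theta> j)) L) \<cdot>\<^sub>v y k"
proof (induction L)
  case Nil
  show ?case by simp
next
  case (Cons j L)
  let ?F = "(1 / (\<theta> m - \<theta> j)) \<cdot>\<^sub>m (A - \<theta> j \<cdot>\<^sub>m 1\<^sub>m (d+1))"
  let ?M = "foldr (\<lambda>j M. ((1 / (\<theta> m - \<theta> j)) \<cdot>\<^sub>m (A - \<theta> j \<cdot>\<^sub>m 1\<^sub>m (d+1))) * M) L (1\<^sub>m (d+1))"
  let ?p = "prod_list (map (\<lambda>j. (\<theta> k - \<theta> j) / (\<theta> m - \<theta> j)) L)"
  have F: "?F \<in> carrier_mat (d+1) (d+1)" using A_carrier by auto
  have M: "?M \<in> carrier_mat (d+1) (d+1)" and My: "?M *\<^sub>v y k = ?p \<cdot>\<^sub>v y k" using Cons by auto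
  have "(?F * ?M) *\<^sub>v y k = ?F *\<^sub>v (?M *\<^sub>v y k)"
    by (rule assoc_mult_mat_vec[OF F M]) simp
  also have "\<dots> = ?p \<cdot>\<^sub>v (?F *\<^sub>v y k)" unfolding My by (rule mult_mat_vec[OF F]) simp
  also have "\<dots> = ?p \<cdot>\<^sub>v (((\<theta> k - \<theta> j) / (\<theta> m - \<theta> j)) \<cdot>\<^sub>v y k)" unfolding factor_y[OF k] ..
  also have "\<dots> = prod_list (map (\<lambda>j. (\<theta> k - \<theta> j) / (\<theta> m - \<theta> j)) (j # L)) \<cdot>\<^sub>v y k"
    by (simp add: smult_smult_assoc mult_ac)
  finally show ?case using F M by simp
qed

lemma E_carrier: "E m \<in> carrier_mat (d+1) (d+1)"
  unfolding prim_idem_def by (rule conjunct1[OF foldr_y[OF le0]])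

lemma E_y:
  assumes m: "m \<le> d" and k: "k \<le> d"
  shows "E m *\<^sub>v y k = (if k = m then y k else 0\<^sub>v (d+1))"
proof -
  let ?L = "filter (\<lambda>j. j \<noteq> m) [0..<d+1]"
  let ?f = "\<lambda>j. (\<theta> k - \<theta> j) / (\<theta> m - \<theta> j)"
  have e: "E m *\<^sub>v y k = prod_list (map ?f ?L) \<cdot>\<^sub>v y k"
    unfolding prim_idem_def using foldr_y[OF k] by blast
  show ?thesis
  proof (cases "k = m")
    case True
    have "prod_list (map ?f ?L) = 1"
    proof (rule prod_list_one)
      fix j assume "j \<in> set ?L"
      hence j: "j \<le> d" "j \<noteq> m" by (auto simp del: upt_Suc)
      have "\<theta> m \<noteq> \<theta> j" using \<theta>_distinct j m unfolding inj_on_def by auto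
      thus "?f j = 1" using True by simp
    qed
    thus ?thesis using e True by simp
  next
    case False
    have "k \<in> set ?L" using k False by (auto simp del: upt_Suc)
    hence "0 \<in> set (map ?f ?L)" by force
    hence "prod_list (map ?f ?L) = 0" by (simp add: prod_list_zero_iff)
    thus ?thesis using e False by (intro eq_vecI) auto
  qed
qed

lemma E_lc_y: "m \<le> d \<Longrightarrow> E m *\<^sub>v lc d \<beta> y = \<beta> m \<cdot>\<^sub>v y m"
proof -
  assume m: "m \<le> d"
  have "E m *\<^sub>v lc d \<beta> y = lc d \<beta> (\<lambda>k. E m *\<^sub>v y k)"
    by (rule mat_lc[OF E_carrier]) simp
  also have "\<dots> = lc d \<beta> (\<lambda>k. if k = m then y m else 0\<^sub>v (d+1))"
    by (rule lc_cong_w) (use m E_y in auto)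
  also have "\<dots> = \<beta> m \<cdot>\<^sub>v y m" by (rule lc_delta[OF y_carrier m])
  finally show ?thesis .
qed

lemma y_indep: "indep d y"
  unfolding indep_def
proof (rule allI, rule impI, rule allI, rule impI)
  fix \<beta> m assume z: "lc d \<beta> y = 0\<^sub>v (d+1)" and m: "m \<le> d"
  have "E m *\<^sub>v 0\<^sub>v (d+1) = 0\<^sub>v (d+1)" using E_carrier[of m] by (intro eq_vecI) auto
  hence "\<beta> m \<cdot>\<^sub>v y m = 0\<^sub>v (d+1)" using E_lc_y[OF m, of \<beta>] z by simp
  thus "\<beta> m = 0" using smult_vec_zero_iff[OF y_carrier y_nz] by blast
qed

lemma y_spans: "spans d y"
  by (rule indep_spans[OF _ y_indep]) simp

lemma y_lc: "lc d \<beta> y = lc d (\<lambda>i. \<Sum>k\<le>d. \<beta> k * U k i) v"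
  unfolding y_def by (rule lc_lc)

lemma dual_foldr:
  assumes L: "set L \<subseteq> {..d}"
  shows "foldr (\<lambda>i M. \<theta>s i \<cdot>\<^sub>m Es i + M) L (0\<^sub>m (d+1) (d+1)) \<in> carrier_mat (d+1) (d+1)
    \<and> foldr (\<lambda>i M. \<theta>s i \<cdot>\<^sub>m Es i + M) L (0\<^sub>m (d+1) (d+1)) *\<^sub>v lc d F v
      = lc d (\<lambda>i. (\<Sum>l\<leftarrow>L. if l = i then \<theta>s l else 0) * F i) v"
  using L
proof (induction L)
  case Nil
  show ?case by (simp, intro eq_vecI) auto
next
  case (Cons l L)
  let ?M = "foldr (\<lambda>i M. \<theta>s i \<cdot>\<^sub>m Es i + M) L (0\<^sub>m (d+1) (d+1))"
  have l: "l \<le> d" using Cons by auto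
  have M: "?M \<in> carrier_mat (d+1) (d+1)" and Mv: "?M *\<^sub>v lc d F v = lc d (\<lambda>i. (\<Sum>l\<leftarrow>L. if l = i then \<theta>s l else 0) * F i) v"
    using Cons by auto
  have Ec: "\<theta>s l \<cdot>\<^sub>m Es l \<in> carrier_mat (d+1) (d+1)" using Es_carrier[OF l] by simp
  have "(\<theta>s l \<cdot>\<^sub>m Es l + ?M) *\<^sub>v lc d F v = (\<theta>s l \<cdot>\<^sub>m Es l) *\<^sub>v lc d F v + ?M *\<^sub>v lc d F v"
    by (rule add_mult_distrib_mat_vec[OF Ec M]) simp
  also have "(\<theta>s l \<cdot>\<^sub>m Es l) *\<^sub>v lc d F v = \<theta>s l \<cdot>\<^sub>v (Es l *\<^sub>v lc d F v)"
    by (rule smult_mat_vec[OF Es_carrier[OF l]]) simp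
  also have "\<dots> = (\<theta>s l * F l) \<cdot>\<^sub>v v l" unfolding Es_lc[OF l] by (simp add: smult_smult_assoc)
  also have "\<dots> = lc d (\<lambda>i. if i = l then \<theta>s l * F l else 0) v" by (rule smult_v[OF l])
  finally have "(\<theta>s l \<cdot>\<^sub>m Es l + ?M) *\<^sub>v lc d F v
      = lc d (\<lambda>i. (if i = l then \<theta>s l * F l else 0) + (\<Sum>l\<leftarrow>L. if l = i then \<theta>s l else 0) * F i) v"
    unfolding Mv lc_add .
  also have "\<dots> = lc d (\<lambda>i. (\<Sum>l\<leftarrow>l # L. if l = i then \<theta>s l else 0) * F i) v"
    by (rule lc_cong) (auto simp: algebra_simps)
  finally show ?case using Ec M by simp
qed

lemma D_carrier: "D \<in> carrier_mat (d+1) (d+1)"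
  unfolding dual_mat_def by (rule conjunct1[OF dual_foldr[of "[0..<d+1]"]]) (auto simp del: upt_Suc)

lemma D_lc: "D *\<^sub>v lc d F v = lc d (\<lambda>i. \<theta>s i * F i) v"
proof -
  have "D *\<^sub>v lc d F v = lc d (\<lambda>i. (\<Sum>l\<leftarrow>[0..<d+1]. if l = i then \<theta>s l else 0) * F i) v"
  proof -
    have "set [0..<d+1] \<subseteq> {..d}" by auto
    from conjunct2[OF dual_foldr[OF this]] show ?thesis unfolding dual_mat_def .
  qed
  also have "\<dots> = lc d (\<lambda>i. \<theta>s i * F i) v"
  proof (rule lc_cong)
    fix i assume i: "i \<le> d"
    have "(\<Sum>l\<leftarrow>[0..<d+1]. if l = i then \<theta>s l else 0) = (\<Sum>l\<in>{0..<d+1}. if l = i then \<theta>s l else 0)"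
      by (simp add: sum_set_upt_conv_sum_list_nat[symmetric] del: upt_Suc)
    also have "\<dots> = \<theta>s i" using i by simp
    finally show "(\<Sum>l\<leftarrow>[0..<d+1]. if l = i then \<theta>s l else 0) * F i = \<theta>s i * F i" by simp
  qed
  finally show ?thesis .
qed

end


lemma lc_single:
  assumes m: "m \<le> d" and w: "w m \<in> carrier_vec (d+1)"
  shows "lc d (\<lambda>k. if k = m then x else 0) w = x \<cdot>\<^sub>v w m"
proof (rule eq_vecI)
  fix i assume "i < dim_vec (x \<cdot>\<^sub>v w m)"
  hence i: "i < d+1" using w by simp
  have "(\<Sum>k\<le>d. (if k = m then x else 0) * w k $ i) = (\<Sum>k\<le>d. if k = m then x * w m $ i else 0)"
    by (rule sum.cong) auto
  thus "lc d (\<lambda>k. if k = m then x else 0) w $ i = (x \<cdot>\<^sub>v w m) $ i" using i m w by simp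
qed (use w in simp)

lemma sum_shift_ge1: "(\<Sum>i\<le>d. (if i \<ge> 1 then f i else 0)) = (\<Sum>i<d. f (Suc i)) + (0::'a::comm_monoid_add)"
  by (induction d) (auto simp: sum.atMost_Suc)

lemma sum_less_d: "(\<Sum>i\<le>(d::nat). (if i < d then f i else 0)) = (\<Sum>i<d. f i) + (0::'a::comm_monoid_add)"
proof -
  have "(\<Sum>i\<le>d. (if i < d then f i else 0)) = (\<Sum>i<Suc d. (if i < d then f i else 0))"
    by (simp only: lessThan_Suc_atMost)
  also have "\<dots> = (\<Sum>i<d. f i)" by (simp del: lessThan_Suc_atMost)
  finally show ?thesis by simp
qed

context tri_setting begin

fun kap :: "nat \<Rightarrow> 'a" where
  "kap 0 = 1"
| "kap (Suc i) = kap i * b i / c (Suc i)"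

lemma kap_nz: "i \<le> d \<Longrightarrow> kap i \<noteq> 0"
  by (induction i) (auto simp: b_nz c_nz)

lemma kap_rel: "i < d \<Longrightarrow> kap (Suc i) * c (Suc i) = kap i * b i"
  using c_nz[of "Suc i"] by simp

definition Bf :: "(nat \<Rightarrow> 'a) \<Rightarrow> (nat \<Rightarrow> 'a) \<Rightarrow> 'a" where
  "Bf F G = (\<Sum>i\<le>d. kap i * F i * G i)"

lemma Bf_comm: "Bf F G = Bf G F"
  unfolding Bf_def by (simp add: mult_ac)

lemma Bf_cong: "(\<And>i. i \<le> d \<Longrightarrow> F i = F' i) \<Longrightarrow> (\<And>i. i \<le> d \<Longrightarrow> G i = G' i) \<Longrightarrow> Bf F G = Bf F' G'"
  unfolding Bf_def by (rule sum.cong) auto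

lemma Bf_lin: "Bf F (\<lambda>i. \<Sum>k\<le>d. \<beta> k * G k i) = (\<Sum>k\<le>d. \<beta> k * Bf F (G k))"
  unfolding Bf_def sum_distrib_left by (subst sum.swap) (simp add: mult_ac)

lemma Bf_scale: "Bf (\<lambda>i. t * F i) G = t * Bf F G"
  unfolding Bf_def sum_distrib_left by (simp add: mult_ac)

lemma Bf_Tf: "Bf (Tf F) G = (\<Sum>i\<le>d. kap i * a i * F i * G i) + (\<Sum>i<d. kap i * b i * (F (i+1) * G i + F i * G (i+1)))"
proof -
  have "Bf (Tf F) G = (\<Sum>i\<le>d. (if i < d then kap i * b i * F (i+1) * G i else 0))
     + (\<Sum>i\<le>d. kap i * a i * F i * G i) + (\<Sum>i\<le>d. (if i \<ge> 1 then kap i * c i * F (i-1) * G i else 0))"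
    unfolding Bf_def sum.distrib[symmetric] by (rule sum.cong) (auto simp: Tf_simp algebra_simps)
  also have "(\<Sum>i\<le>d. (if i < d then kap i * b i * F (i+1) * G i else 0)) = (\<Sum>i<d. kap i * b i * F (i+1) * G i)"
    using sum_less_d[where f="\<lambda>i. kap i * b i * F (i+1) * G i" and d=d] by simp
  also have "(\<Sum>i\<le>d. (if i \<ge> 1 then kap i * c i * F (i-1) * G i else 0)) = (\<Sum>i<d. kap (Suc i) * c (Suc i) * F i * G (Suc i))"
    using sum_shift_ge1[where d=d and f="\<lambda>i. kap i * c i * F (i-1) * G i"] by simp
  also have "\<dots> = (\<Sum>i<d. kap i * b i * F i * G (i+1))"
  proof (rule sum.cong)
    fix i assume "i \<in> {..<d}"
    hence "c (Suc i) \<noteq> 0" using c_nz[of "Suc i"] by simp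
    thus "kap (Suc i) * c (Suc i) * F i * G (Suc i) = kap i * b i * F i * G (i+1)"
      by simp
  qed simp
  finally show ?thesis by (simp add: sum.distrib algebra_simps)
qed

lemma Tf_sym: "Bf (Tf F) G = Bf F (Tf G)"
  unfolding Bf_comm[of F] Bf_Tf by (simp add: algebra_simps)

lemma U_orth: assumes j: "j \<le> d" and k: "k \<le> d" and jk: "j \<noteq> k" shows "Bf (U j) (U k) = 0"
proof -
  have "\<theta> j * Bf (U j) (U k) = Bf (Tf (U j)) (U k)"
    unfolding Bf_scale[symmetric] by (rule Bf_cong) (auto simp: eig_coord j)
  also have "\<dots> = Bf (U j) (Tf (U k))" by (rule Tf_sym)
  also have "\<dots> = \<theta> k * Bf (U j) (U k)"
    unfolding Bf_comm[of "U j"] Bf_scale[symmetric] by (rule Bf_cong) (auto simp: eig_coord k)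
  finally have "(\<theta> j - \<theta> k) * Bf (U j) (U k) = 0" by (simp add: algebra_simps)
  moreover have "\<theta> j \<noteq> \<theta> k" using \<theta>_distinct j k jk unfolding inj_on_def by auto
  ultimately show ?thesis by simp
qed

lemma Bf_lin_U: "m \<le> d \<Longrightarrow> Bf (U m) (\<lambda>i. \<Sum>k\<le>d. \<beta> k * U k i) = \<beta> m * Bf (U m) (U m)"
proof -
  assume m: "m \<le> d"
  have "Bf (U m) (\<lambda>i. \<Sum>k\<le>d. \<beta> k * U k i) = (\<Sum>k\<le>d. \<beta> k * Bf (U m) (U k))" by (rule Bf_lin)
  also have "\<dots> = (\<Sum>k\<le>d. if k = m then \<beta> m * Bf (U m) (U m) else 0)"
    by (rule sum.cong) (auto simp: U_orth m)
  also have "\<dots> = \<beta> m * Bf (U m) (U m)" using m by simp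
  finally show ?thesis .
qed

lemma U_nondeg: assumes m: "m \<le> d" shows "Bf (U m) (U m) \<noteq> 0"
proof
  assume z: "Bf (U m) (U m) = 0"
  obtain \<beta> where \<beta>: "v 0 = lc d \<beta> y" using y_spans v_carrier[of 0] unfolding spans_def by auto
  have "v 0 = lc d (\<lambda>k. if k = 0 then 1 else 0) v" using smult_v[of 0 1] v_carrier[of 0] by simp
  hence "lc d (\<lambda>k. if k = 0 then 1 else 0) v = lc d (\<lambda>i. \<Sum>k\<le>d. \<beta> k * U k i) v"
    using \<beta> y_lc by simp
  hence co: "\<And>i. i \<le> d \<Longrightarrow> (if i = 0 then 1 else 0) = (\<Sum>k\<le>d. \<beta> k * U k i)"
    using indep_eq[OF v_indep] by blast
  have "Bf (U m) (\<lambda>i. if i = 0 then 1 else 0) = Bf (U m) (\<lambda>i. \<Sum>k\<le>d. \<beta> k * U k i)"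
    by (rule Bf_cong) (auto simp: co)
  also have "\<dots> = 0" unfolding Bf_lin_U[OF m] z by simp
  finally have "Bf (U m) (\<lambda>i. if i = 0 then 1 else 0) = 0" .
  moreover have "Bf (U m) (\<lambda>i. if i = 0 then 1 else 0) = 1"
    unfolding Bf_def by (simp add: if_distrib cong: if_cong)
  ultimately show False by simp
qed

definition gam :: "nat \<Rightarrow> nat \<Rightarrow> 'a" where
  "gam j = (SOME G. D *\<^sub>v y j = lc d G y)"

lemma gam: "D *\<^sub>v y j = lc d (gam j) y"
proof -
  have "D *\<^sub>v y j \<in> carrier_vec (d+1)" using D_carrier by simp
  hence "\<exists>G. D *\<^sub>v y j = lc d G y" using y_spans unfolding spans_def by auto
  thus ?thesis unfolding gam_def by (rule someI_ex)
qed

lemma CO: assumes j: "j \<le> d" and i: "i \<le> d" shows "\<theta>s i * U j i = (\<Sum>k\<le>d. gam j k * U k i)"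
proof -
  have "lc d (\<lambda>i. \<theta>s i * U j i) v = lc d (\<lambda>i. \<Sum>k\<le>d. gam j k * U k i) v"
    using gam[of j] unfolding y_lc unfolding y_def D_lc .
  thus ?thesis using indep_eq[OF v_indep _ i] by blast
qed

lemma gam_sym: assumes j: "j \<le> d" and m: "m \<le> d" shows "gam j m = 0 \<longleftrightarrow> gam m j = 0"
proof -
  have 1: "Bf (U m) (\<lambda>i. \<theta>s i * U j i) = gam j m * Bf (U m) (U m)"
    unfolding Bf_lin_U[OF m, symmetric] by (rule Bf_cong) (auto simp: CO j)
  have 2: "Bf (U j) (\<lambda>i. \<theta>s i * U m i) = gam m j * Bf (U j) (U j)"
    unfolding Bf_lin_U[OF j, symmetric] by (rule Bf_cong) (auto simp: CO m)
  have 3: "Bf (U m) (\<lambda>i. \<theta>s i * U j i) = Bf (U j) (\<lambda>i. \<theta>s i * U m i)"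
    unfolding Bf_def by (simp add: mult_ac)
  show ?thesis using 1 2 3 U_nondeg[OF j] U_nondeg[OF m] by auto
qed

lemma D_y: "D *\<^sub>v lc d \<beta> y = lc d (\<lambda>i. \<Sum>k\<le>d. \<beta> k * gam k i) y"
proof -
  have "D *\<^sub>v lc d \<beta> y = lc d \<beta> (\<lambda>k. D *\<^sub>v y k)" by (rule mat_lc[OF D_carrier]) simp
  also have "\<dots> = lc d \<beta> (\<lambda>k. lc d (gam k) y)" by (simp add: gam)
  also have "\<dots> = lc d (\<lambda>i. \<Sum>k\<le>d. \<beta> k * gam k i) y" by (rule lc_lc)
  finally show ?thesis .
qed

lemma EDE_lc: assumes r: "r \<le> d" and j: "j \<le> d"
  shows "(E r * D * E j) *\<^sub>v lc d \<beta> y = (\<beta> j * gam j r) \<cdot>\<^sub>v y r"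
proof -
  have c: "E r * D \<in> carrier_mat (d+1) (d+1)" by (rule mult_carrier_mat[OF E_carrier D_carrier])
  have "(E r * D * E j) *\<^sub>v lc d \<beta> y = (E r * D) *\<^sub>v (E j *\<^sub>v lc d \<beta> y)"
    by (rule assoc_mult_mat_vec[OF c E_carrier]) simp
  also have "\<dots> = E r *\<^sub>v (D *\<^sub>v (E j *\<^sub>v lc d \<beta> y))"
    by (rule assoc_mult_mat_vec[OF E_carrier D_carrier]) (rule mult_mat_vec_carrier[OF E_carrier], simp)
  also have "E j *\<^sub>v lc d \<beta> y = lc d (\<lambda>k. if k = j then \<beta> j else 0) y"
    unfolding E_lc_y[OF j] by (rule lc_single[symmetric, OF j y_carrier])
  also have "D *\<^sub>v \<dots> = lc d (\<lambda>i. \<Sum>k\<le>d. (if k = j then \<beta> j else 0) * gam k i) y" by (rule D_y)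
  also have "E r *\<^sub>v \<dots> = (\<Sum>k\<le>d. (if k = j then \<beta> j else 0) * gam k r) \<cdot>\<^sub>v y r" by (rule E_lc_y[OF r])
  also have "(\<Sum>k\<le>d. (if k = j then \<beta> j else 0) * gam k r) = (\<Sum>k\<le>d. if k = j then \<beta> j * gam j r else 0)"
    by (rule sum.cong) auto
  also have "\<dots> = \<beta> j * gam j r" using j by simp
  finally show ?thesis .
qed

lemma adj: assumes r: "r \<le> d" and j: "j \<le> d"
  shows "E r * D * E j = 0\<^sub>m (d+1) (d+1) \<longleftrightarrow> gam j r = 0"
proof
  assume z: "E r * D * E j = 0\<^sub>m (d+1) (d+1)"
  have "(1 * gam j r) \<cdot>\<^sub>v y r = (E r * D * E j) *\<^sub>v lc d (\<lambda>k. if k = j then 1 else 0) y"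
    using EDE_lc[OF r j] by simp
  also have "\<dots> = 0\<^sub>v (d+1)" unfolding z by (intro eq_vecI) auto
  finally show "gam j r = 0" using smult_vec_zero_iff[OF y_carrier y_nz] by simp
next
  assume g: "gam j r = 0"
  show "E r * D * E j = 0\<^sub>m (d+1) (d+1)"
  proof (rule mat_zeroI)
    show "E r * D * E j \<in> carrier_mat (d+1) (d+1)" by (rule mult_carrier_mat[OF mult_carrier_mat[OF E_carrier D_carrier] E_carrier])
    fix w :: "'a vec" assume "w \<in> carrier_vec (d+1)"
    then obtain \<beta> where w: "w = lc d \<beta> y" using y_spans unfolding spans_def by auto
    have "(E r * D * E j) *\<^sub>v lc d \<beta> y = 0\<^sub>v (d+1)" unfolding EDE_lc[OF r j] g
      by (intro eq_vecI) auto
    thus "(E r * D * E j) *\<^sub>v w = 0\<^sub>v (d+1)" using w by simp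
  qed
qed

lemma y_delta: assumes r: "r \<le> d" shows "y r = lc d (\<lambda>k. if k = r then 1 else 0) y"
proof (rule eq_vecI)
  fix i assume "i < dim_vec (lc d (\<lambda>k. if k = r then 1 else 0) y)"
  hence i: "i < d+1" by simp
  have "(\<Sum>k\<le>d. (if k = r then 1 else 0) * y k $ i) = (\<Sum>k\<le>d. if k = r then y r $ i else 0)"
    by (rule sum.cong) auto
  thus "y r $ i = lc d (\<lambda>k. if k = r then 1 else 0) y $ i" using i r by simp
qed simp

lemma trace_ED: assumes r: "r \<le> d" shows "trace_mat (E r * D) = gam r r"
proof -
  let ?M = "E r * D"
  have M: "?M \<in> carrier_mat (d+1) (d+1)" by (rule mult_carrier_mat[OF E_carrier D_carrier])
  have My: "?M *\<^sub>v lc d \<beta> y = (\<Sum>k\<le>d. \<beta> k * gam k r) \<cdot>\<^sub>v y r" for \<beta>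
  proof -
    have "?M *\<^sub>v lc d \<beta> y = E r *\<^sub>v (D *\<^sub>v lc d \<beta> y)"
      by (rule assoc_mult_mat_vec[OF E_carrier D_carrier]) simp
    also have "\<dots> = (\<Sum>k\<le>d. \<beta> k * gam k r) \<cdot>\<^sub>v y r" unfolding D_y E_lc_y[OF r] ..
    finally show ?thesis .
  qed
  define W where "W l = (SOME \<beta>. unit_vec (d+1) l = lc d \<beta> y)" for l
  have W: "unit_vec (d+1) l = lc d (W l) y" for l
  proof -
    have "\<exists>\<beta>. unit_vec (d+1) l = lc d \<beta> y" using y_spans unfolding spans_def by auto
    thus ?thesis unfolding W_def by (rule someI_ex)
  qed
  have Wd: "(\<Sum>l\<le>d. y r $ l * W l k) = (if k = r then 1 else 0)" if k: "k \<le> d" for k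
  proof -
    have "y r = lc d (\<lambda>l. y r $ l) (\<lambda>l. unit_vec (d+1) l)" by (rule unit_lc) simp
    also have "\<dots> = lc d (\<lambda>l. y r $ l) (\<lambda>l. lc d (W l) y)" by (rule lc_cong_w) (rule W)
    also have "\<dots> = lc d (\<lambda>k. \<Sum>l\<le>d. y r $ l * W l k) y" by (rule lc_lc)
    finally have e: "y r = lc d (\<lambda>k. \<Sum>l\<le>d. y r $ l * W l k) y" .
    have "lc d (\<lambda>k. if k = r then 1 else 0) y = lc d (\<lambda>k. \<Sum>l\<le>d. y r $ l * W l k) y"
      by (subst y_delta[OF r, symmetric]) (rule e)
    from indep_eq[OF y_indep this k] show ?thesis by (rule sym)
  qed
  have "trace_mat ?M = (\<Sum>l\<le>d. ?M $$ (l,l))"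
  proof -
    have "dim_row ?M = Suc d" using M by (simp only: carrier_matD(1))
    thus ?thesis unfolding trace_mat_def by (simp only: lessThan_Suc_atMost)
  qed
  also have "\<dots> = (\<Sum>l\<le>d. (?M *\<^sub>v unit_vec (d+1) l) $ l)"
    by (rule sum.cong) (use mat_unit_index[OF M] in auto)
  also have "\<dots> = (\<Sum>l\<le>d. (\<Sum>k\<le>d. W l k * gam k r) * y r $ l)"
  proof (rule sum.cong)
    fix l assume l: "l \<in> {..d}"
    have "(?M *\<^sub>v unit_vec (d+1) l) = (\<Sum>k\<le>d. W l k * gam k r) \<cdot>\<^sub>v y r"
      unfolding W by (rule My)
    thus "(?M *\<^sub>v unit_vec (d+1) l) $ l = (\<Sum>k\<le>d. W l k * gam k r) * y r $ l" using l by simp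
  qed simp
  also have "\<dots> = (\<Sum>k\<le>d. gam k r * (\<Sum>l\<le>d. y r $ l * W l k))"
    unfolding sum_distrib_left sum_distrib_right by (subst sum.swap) (simp add: mult_ac)
  also have "\<dots> = (\<Sum>k\<le>d. if k = r then gam r r else 0)"
    by (rule sum.cong) (auto simp: Wd)
  also have "\<dots> = gam r r" using r by simp
  finally show ?thesis .
qed
end


context tri_setting begin

lemma core:
  assumes r: "r \<le> d" and s: "s \<le> d" and rs: "r \<noteq> s"
  shows "(\<forall>j\<le>d. (j \<noteq> r \<and> gam r j \<noteq> 0) \<longleftrightarrow> j = s) \<longleftrightarrow>
    (gam r r \<noteq> \<theta>s 0 \<and> (\<forall>i\<le>d. U s i = U r i * ((\<theta>s i - gam r r) / (\<theta>s 0 - gam r r))))"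
proof
  assume H: "\<forall>j\<le>d. (j \<noteq> r \<and> gam r j \<noteq> 0) \<longleftrightarrow> j = s"
  have gs: "gam r s \<noteq> 0" using H s by auto
  have gk: "gam r k = 0" if "k \<le> d" "k \<noteq> r" "k \<noteq> s" for k using H that by auto
  have st: "(\<theta>s i - gam r r) * U r i = gam r s * U s i" if i: "i \<le> d" for i
  proof -
    have "(\<Sum>k\<le>d. gam r k * U k i) = (\<Sum>k\<le>d. (if k = r then gam r r * U r i else 0) + (if k = s then gam r s * U s i else 0))"
      by (rule sum.cong) (use gk rs in auto)
    also have "\<dots> = gam r r * U r i + gam r s * U s i" using r s by (simp add: sum.distrib)
    finally show ?thesis using CO[OF r i] by (simp add: algebra_simps)
  qed
  have g0: "\<theta>s 0 - gam r r = gam r s" using st[of 0] by simp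
  show "gam r r \<noteq> \<theta>s 0 \<and> (\<forall>i\<le>d. U s i = U r i * ((\<theta>s i - gam r r) / (\<theta>s 0 - gam r r)))"
  proof (intro conjI allI impI)
    show "gam r r \<noteq> \<theta>s 0" using g0 gs by auto
    fix i assume i: "i \<le> d"
    show "U s i = U r i * ((\<theta>s i - gam r r) / (\<theta>s 0 - gam r r))"
      unfolding g0 using st[OF i] gs by (simp add: field_simps)
  qed
next
  assume "gam r r \<noteq> \<theta>s 0 \<and> (\<forall>i\<le>d. U s i = U r i * ((\<theta>s i - gam r r) / (\<theta>s 0 - gam r r)))"
  hence ne: "\<theta>s 0 - gam r r \<noteq> 0" and HU: "\<And>i. i \<le> d \<Longrightarrow> U s i = U r i * ((\<theta>s i - gam r r) / (\<theta>s 0 - gam r r))"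
    by auto
  define \<beta> where "\<beta> = \<theta>s 0 - gam r r"
  define h where "h k = (if k = r then 0 else gam r k) - (if k = s then \<beta> else 0)" for k
  have hz: "(\<Sum>k\<le>d. h k * U k i) = 0" if i: "i \<le> d" for i
  proof -
    have "(\<Sum>k\<le>d. h k * U k i) = (\<Sum>k\<le>d. gam r k * U k i - (if k = r then gam r r * U r i else 0) - (if k = s then \<beta> * U s i else 0))"
      by (rule sum.cong) (auto simp: h_def algebra_simps)
    also have "\<dots> = (\<Sum>k\<le>d. gam r k * U k i) - gam r r * U r i - \<beta> * U s i"
      using r s by (simp add: sum_subtractf)
    also have "\<dots> = \<theta>s i * U r i - gam r r * U r i - \<beta> * U s i" using CO[OF r i] by simp
    also have "\<beta> * U s i = U r i * (\<theta>s i - gam r r)" using HU[OF i] ne unfolding \<beta>_def by simp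
    finally show ?thesis by (simp add: algebra_simps)
  qed
  have "lc d h y = lc d (\<lambda>i. 0) y"
  proof -
    have "lc d h y = lc d (\<lambda>i. \<Sum>k\<le>d. h k * U k i) v" by (rule y_lc)
    also have "\<dots> = lc d (\<lambda>i. 0) v" by (rule lc_cong) (simp add: hz)
    also have "\<dots> = lc d (\<lambda>i. 0) y" by (rule eq_vecI) auto
    finally show ?thesis .
  qed
  hence h0: "\<And>k. k \<le> d \<Longrightarrow> h k = 0" using indep_eq[OF y_indep] by fastforce
  show "\<forall>j\<le>d. (j \<noteq> r \<and> gam r j \<noteq> 0) \<longleftrightarrow> j = s"
  proof (intro allI impI)
    fix j assume j: "j \<le> d"
    show "(j \<noteq> r \<and> gam r j \<noteq> 0) \<longleftrightarrow> j = s"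
    proof (cases "j = s")
      case True
      have "h s = gam r s - \<beta>" using rs unfolding h_def by simp
      hence "gam r s = \<beta>" using h0[OF s] by simp
      thus ?thesis using True rs ne unfolding \<beta>_def by simp
    next
      case False
      show ?thesis
      proof (cases "j = r")
        case True thus ?thesis using False by simp
      next
        case False2: False
        have "h j = gam r j" using False False2 unfolding h_def by simp
        thus ?thesis using h0[OF j] False by simp
      qed
    qed
  qed
qed

lemma main:
  assumes r: "r \<le> d" and s: "s \<le> d" and rs: "r \<noteq> s"
  shows "((\<forall>j \<le> d. (j \<noteq> r \<and> prim_idem A \<theta> d r * dual_mat d \<theta>s Es * prim_idem A \<theta> d j
                          \<noteq> 0\<^sub>m (d+1) (d+1)) \<longleftrightarrow> j = s))
         \<longleftrightarrow>
         (trace_mat (prim_idem A \<theta> d r * dual_mat d \<theta>s Es) \<noteq> \<theta>s 0 \<and>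
          (\<forall>i \<le> d. poly (upoly d a b c i) (\<theta> s) =
             poly (upoly d a b c i) (\<theta> r) *
               ((\<theta>s i - trace_mat (prim_idem A \<theta> d r * dual_mat d \<theta>s Es))
                / (\<theta>s 0 - trace_mat (prim_idem A \<theta> d r * dual_mat d \<theta>s Es)))))"
proof -
  have L: "(\<forall>j \<le> d. (j \<noteq> r \<and> E r * D * E j \<noteq> 0\<^sub>m (d+1) (d+1)) \<longleftrightarrow> j = s)
      \<longleftrightarrow> (\<forall>j\<le>d. (j \<noteq> r \<and> gam r j \<noteq> 0) \<longleftrightarrow> j = s)"
  proof -
    have "\<And>j. j \<le> d \<Longrightarrow> (E r * D * E j \<noteq> 0\<^sub>m (d+1) (d+1)) \<longleftrightarrow> gam r j \<noteq> 0"
      using adj[OF r] gam_sym[OF r] by blast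
    thus ?thesis by auto
  qed
  show ?thesis
    unfolding L trace_ED[OF r] core[OF r s rs]
    unfolding U_def ..
qed

end

theorem proposition7p14:
  fixes d :: nat
    and Es :: "nat \<Rightarrow> 'a::field mat"
    and A :: "'a mat"
    and \<theta> \<theta>s :: "nat \<Rightarrow> 'a"
    and v :: "nat \<Rightarrow> 'a vec"
    and a b c :: "nat \<Rightarrow> 'a"
    and r s :: nat
  assumes d: "d \<ge> 1"
    and Es_carrier: "\<And>i. i \<le> d \<Longrightarrow> Es i \<in> carrier_mat (d+1) (d+1)"
    and Es_orth: "\<And>i j. i \<le> d \<Longrightarrow> j \<le> d \<Longrightarrow>
                    Es i * Es j = (if i = j then Es i else 0\<^sub>m (d+1) (d+1))"
    and Es_rank: "\<And>i. i \<le> d \<Longrightarrow> vec_space.rank (d+1) (Es i) = 1"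
    and A_carrier: "A \<in> carrier_mat (d+1) (d+1)"
    and A_zero: "\<And>i j. i \<le> d \<Longrightarrow> j \<le> d \<Longrightarrow> (i > j + 1 \<or> j > i + 1) \<Longrightarrow>
                   Es i * A * Es j = 0\<^sub>m (d+1) (d+1)"
    and A_nonzero: "\<And>i j. i \<le> d \<Longrightarrow> j \<le> d \<Longrightarrow> (i = j + 1 \<or> j = i + 1) \<Longrightarrow>
                   Es i * A * Es j \<noteq> 0\<^sub>m (d+1) (d+1)"
    and \<theta>_distinct: "inj_on \<theta> {0..d}"
    and \<theta>_eig: "\<And>i. i \<le> d \<Longrightarrow> eigenvalue A (\<theta> i)"
    and v_carrier: "\<And>i. i \<le> d \<Longrightarrow> v i \<in> carrier_vec (d+1)"
    and v_feasible: "\<And>i. i \<le> d \<Longrightarrow> \<exists>w \<in> carrier_vec (d+1). v i = Es i *\<^sub>v w"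
    and v_inj: "inj_on v {0..d}"
    and v_basis: "vectorspace.basis class_ring (module_vec TYPE('a) (d+1)) (v ` {0..d})"
    and v_action: "\<And>i. i \<le> d \<Longrightarrow>
          A *\<^sub>v v i = (if i \<ge> 1 then b (i - 1) \<cdot>\<^sub>v v (i - 1) else 0\<^sub>v (d+1))
                     + a i \<cdot>\<^sub>v v i
                     + (if i < d then c (i + 1) \<cdot>\<^sub>v v (i + 1) else 0\<^sub>v (d+1))"
    and rs: "r \<le> d" "s \<le> d" "r \<noteq> s"
  shows "((\<forall>j \<le> d. (j \<noteq> r \<and> prim_idem A \<theta> d r * dual_mat d \<theta>s Es * prim_idem A \<theta> d j
                          \<noteq> 0\<^sub>m (d+1) (d+1)) \<longleftrightarrow> j = s))
         \<longleftrightarrow>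
         (trace_mat (prim_idem A \<theta> d r * dual_mat d \<theta>s Es) \<noteq> \<theta>s 0 \<and>
          (\<forall>i \<le> d. poly (upoly d a b c i) (\<theta> s) =
             poly (upoly d a b c i) (\<theta> r) *
               ((\<theta>s i - trace_mat (prim_idem A \<theta> d r * dual_mat d \<theta>s Es))
                / (\<theta>s 0 - trace_mat (prim_idem A \<theta> d r * dual_mat d \<theta>s Es)))))"
proof -
  interpret tri_setting d Es A \<theta> \<theta>s v a b c
    by (unfold_locales) (fact d Es_carrier Es_orth A_carrier A_nonzero \<theta>_distinct \<theta>_eig
        v_carrier v_feasible v_inj v_basis v_action)+
  show ?thesis by (rule main[OF rs])
qed


end
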